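(* Let $X$ be a Polish space, $\mathbf f=(f_n)_n$ a sequence of continuous real-valued functions on $X$ which is relatively compact in $\mathcal B_1(X)$, and $f$ a continuous function belonging to the pointwise closure of $\{f_n\}$. Then for every $L\in[\mathbb N]$: $L\in\mathcal L_{\mathbf f,f}$ if and only if the tree $S_L$ is well-founded.
   Context: $\mathcal B_1(X)$ is the set of real-valued Baire-1 functions on $X$; $(f_n)_n$ is relatively compact in $\mathcal B_1(X)$ if the closure of $\{f_n\}$ in $\mathbb R^X$ is compact and contained in $\mathcal B_1(X)$. $[\mathbb N]$ is the set of infinite subsets of $\mathbb N$; $\mathcal L_{\mathbf f,f}=\{L\in[\mathbb N]:(f_n)_{n\in L}\to f\text{ pointwise}\}$. Fix a compatible complete metric on $X$, a countable dense $D\subseteq X$ and an enumeration $(B_n)_n$ of all closed balls with centers in $D$ and rational radii. A finite sequence $w=(l_0,\dots,l_k)$ is acceptable if $B_{l_0}\supseteq\dots\supseteq B_{l_k}$ and $\mathrm{diam}(B_{l_i})\le\frac1{i+1}$ for all $i$; the empty sequence is acceptable. A tree on $\mathbb N\times\mathbb N$ is identified with a set of pairs $(s,w)$ of finite sequences of equal length closed under initial segments; well-founded means no infinite branch. For $d\in\mathbb N$, $S^d_L$ is the set of $(s,w)$ with $|s|=|w|=k$, $s=(n_0<\dots<n_{k-1})$ with $n_i\in L$, $w=(l_0,\dots,l_{k-1})$ acceptable, and $|f_{n_i}(z)-f(z)|>\frac1{d+1}$ for all $i<k$ and $z\in B_{l_i}$. $S_L$ consists of the empty pair together with all $(d^\frown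 s',d^\frown w')$ with $d\in\mathbb N$ and $(s',w')\in S^d_L$. *)

theory Defs
  imports "HOL-Analysis.Analysis"
begin

definition baire1 :: "('a::topological_space \<Rightarrow> real) \<Rightarrow> bool" where
  "baire1 g \<longleftrightarrow> (\<exists>h :: nat \<Rightarrow> 'a \<Rightarrow> real. (\<forall>n. continuous_on UNIV (h n))
                      \<and> (\<forall>x. (\<lambda>n. h n x) \<longlonglongrightarrow> g x))"

definition conv_sets :: "(nat \<Rightarrow> 'a \<Rightarrow> real) \<Rightarrow> ('a \<Rightarrow> real) \<Rightarrow> nat set set" where
  "conv_sets fs f = {L. infinite L \<and> (\<forall>x. (\<lambda>k. fs (enumerate L k) x) \<longlonglongrightarrow> f x)}"

definition acceptable :: "(nat \<Rightarrow> 'a::metric_space set) \<Rightarrow> nat list \<Rightarrow> bool" where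
  "acceptable B w \<longleftrightarrow>
     (\<forall>i. Suc i < length w \<longrightarrow> B (w ! Suc i) \<subseteq> B (w ! i)) \<and>
     (\<forall>i < length w. diameter (B (w ! i)) \<le> 1 / (real i + 1))"

definition S_d :: "(nat \<Rightarrow> 'a::metric_space \<Rightarrow> real) \<Rightarrow> ('a \<Rightarrow> real) \<Rightarrow> (nat \<Rightarrow> 'a set)
                   \<Rightarrow> nat set \<Rightarrow> nat \<Rightarrow> (nat list \<times> nat list) set" where
  "S_d fs f B L d = {(s, w). length s = length w \<and> sorted_wrt (<) s \<and> set s \<subseteq> L \<and>
      acceptable B w \<and>
      (\<forall>i < length s. \<forall>z \<in> B (w ! i). \<bar>fs (s ! i) z - f z\<bar> > 1 / (real d + 1))}"

definition S_tree :: "(nat \<Rightarrow> 'a::metric_space \<Rightarrow> real) \<Rightarrow> ('a \<Rightarrow> real) \<Rightarrow> (nat \<Rightarrow> 'a set)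
                   \<Rightarrow> nat set \<Rightarrow> (nat list \<times> nat list) set" where
  "S_tree fs f B L = {([], [])} \<union> {(d # s', d # w') | d s' w'. (s', w') \<in> S_d fs f B L d}"

definition wf_tree :: "(nat list \<times> nat list) set \<Rightarrow> bool" where
  "wf_tree T \<longleftrightarrow> \<not> (\<exists>\<sigma> \<omega> :: nat \<Rightarrow> nat. \<forall>k. (map \<sigma> [0..<k], map \<omega> [0..<k]) \<in> T)"

end

theory Submission
  imports Defs
begin

lemma diam_cball_le:
  fixes c :: "'a::metric_space"
  assumes "0 \<le> r"
  shows "diameter (cball c r) \<le> 2 * r"
proof -
  have "cball c r \<noteq> {}" using assms by auto
  moreover have "dist x y \<le> 2 * r" if "x \<in> cball c r" "y \<in> cball c r" for x y
  proof -
    have "dist x c \<le> r" "dist c y \<le> r" using that by (auto simp: dist_commute[of x c])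
    then show ?thesis using dist_triangle[of x y c] by linarith
  qed
  ultimately show ?thesis
    unfolding diameter_def by (auto intro!: cSUP_least)
qed

lemma pick_ball:
  fixes B :: "nat \<Rightarrow> 'a::metric_space set"
  assumes B: "range B = {cball x (real_of_rat r) | x r. x \<in> D \<and> r > 0}"
    and D: "closure D = UNIV" and V: "open V" "x \<in> V"
  shows "\<exists>j. x \<in> interior (B j) \<and> B j \<subseteq> V \<and> diameter (B j) \<le> 1 / (real i + 1)"
proof -
  obtain \<rho> where \<rho>: "\<rho> > 0" "ball x \<rho> \<subseteq> V" using V open_contains_ball by blast
  define e where "e = min (\<rho>/3) (1/(2*(real i+1)))"
  have e: "e > 0" using \<rho> by (simp add: e_def)
  obtain r where r: "r \<in> \<rat>" "0 < r" "r < e" using Rats_dense_in_real[OF e] by blast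
  then obtain q where q: "r = real_of_rat q" by (auto simp: Rats_def)
  have q0: "q > 0" using r q by simp
  have "x \<in> closure D" using D by simp
  then obtain c where c: "c \<in> D" "dist c x < r" using r(2) closure_approachable by blast
  have "cball c r \<in> range B" unfolding B q using c q0 q by blast
  then obtain j where j: "B j = cball c r" by auto
  have "x \<in> ball c r" using c by simp
  moreover have "ball c r \<subseteq> interior (cball c r)"
    by (rule interior_maximal) auto
  moreover have "cball c r \<subseteq> ball x \<rho>"
  proof
    fix z assume "z \<in> cball c r"
    then have "dist c z \<le> r" by simp
    moreover have "dist x c < r" using c by (simp add: dist_commute[of x c])
    ultimately have "dist x z < 2 * r" using dist_triangle[of x z c] by linarith
    also have "2 * r \<le> \<rho>" using r unfolding e_def by linarith
    finally show "z \<in> ball x \<rho>" by simp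
  qed
  moreover have "diameter (cball c r) \<le> 1 / (real i + 1)"
  proof -
    have "diameter (cball c r) \<le> 2 * r" by (rule diam_cball_le) (use r in auto)
    also have "\<dots> \<le> 1 / (real i + 1)" using r unfolding e_def by (simp add: field_simps)
    finally show ?thesis .
  qed
  ultimately have "x \<in> interior (B j) \<and> B j \<subseteq> V \<and> diameter (B j) \<le> 1 / (real i + 1)"
    unfolding j using \<rho>(2) by blast
  then show ?thesis by blast
qed

lemma map_upt_Suc0: "map \<sigma> [0..<Suc m] = \<sigma> 0 # map (\<lambda>i. \<sigma> (Suc i)) [0..<m]"
  by (induct m) auto

theorem lemma5p12:
  fixes fs :: "nat \<Rightarrow> 'a::polish_space \<Rightarrow> real"
    and f :: "'a \<Rightarrow> real"
    and D :: "'a set"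
    and B :: "nat \<Rightarrow> 'a set"
    and L :: "nat set"
  assumes cont: "\<And>n. continuous_on UNIV (fs n)"
    and relcomp: "compact (closure (range fs))" "closure (range fs) \<subseteq> {g. baire1 g}"
    and f_cont: "continuous_on UNIV f"
    and f_cl: "f \<in> closure (range fs)"
    and D: "countable D" "closure D = UNIV"
    and B: "range B = {cball x (real_of_rat r) | x r. x \<in> D \<and> r > 0}"
    and L: "infinite L"
  shows "L \<in> conv_sets fs f \<longleftrightarrow> wf_tree (S_tree fs f B L)"
proof
  assume conv: "L \<in> conv_sets fs f"
  show "wf_tree (S_tree fs f B L)"
    unfolding wf_tree_def
  proof
    assume "\<exists>\<sigma> \<omega>. \<forall>k. (map \<sigma> [0..<k], map \<omega> [0..<k]) \<in> S_tree fs f B L"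
    then obtain \<sigma> \<omega> where br: "\<And>k. (map \<sigma> [0..<k], map \<omega> [0..<k]) \<in> S_tree fs f B L" by blast
    define d where "d = \<sigma> 0"
    define s where "s = (\<lambda>i. \<sigma> (Suc i))"
    define w where "w = (\<lambda>i. \<omega> (Suc i))"
    have Sd: "(map s [0..<m], map w [0..<m]) \<in> S_d fs f B L d" for m
      using br[of "Suc m"] unfolding map_upt_Suc0 S_tree_def s_def w_def d_def by auto
    have Sd': "sorted_wrt (<) (map s [0..<m]) \<and> set (map s [0..<m]) \<subseteq> L \<and> acceptable B (map w [0..<m])
       \<and> (\<forall>i < m. \<forall>z \<in> B (w i). \<bar>fs (s i) z - f z\<bar> > 1 / (real d + 1))" for m
      using Sd[of m] unfolding S_d_def by (simp del: upt_Suc add: nth_map_upt)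
    have smono: "s i < s (Suc i)" for i
      using Sd'[of "Suc (Suc i)"] unfolding sorted_wrt_iff_nth_less
      by (simp del: upt_Suc add: nth_map_upt)
    have sL: "s i \<in> L" for i
      using Sd'[of "Suc i"] by auto
    have wsub: "B (w (Suc i)) \<subseteq> B (w i)" for i
      using Sd'[of "Suc (Suc i)"] unfolding acceptable_def by (simp del: upt_Suc add: nth_map_upt)
    have wdiam: "diameter (B (w i)) \<le> 1 / (real i + 1)" for i
      using Sd'[of "Suc i"] unfolding acceptable_def by (simp del: upt_Suc add: nth_map_upt)
    have wval: "\<And>z. z \<in> B (w i) \<Longrightarrow> \<bar>fs (s i) z - f z\<bar> > 1 / (real d + 1)" for i
      using Sd'[of "Suc i"] by (simp del: upt_Suc)
    have Bform: "\<exists>c r. B j = cball c (real_of_rat r) \<and> r > 0" for j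
    proof -
      have "B j \<in> range B" by simp
      then show ?thesis unfolding B by blast
    qed
    have Bcl: "closed (B j)" for j using Bform[of j] by auto
    have Bne: "B j \<noteq> {}" for j using Bform[of j]
      by (metis centre_in_cball empty_iff order_less_imp_le zero_less_of_rat_iff)
    have Bbd: "bounded (B j)" for j using Bform[of j] by auto
    have dec: "m \<le> n \<Longrightarrow> B (w n) \<subseteq> B (w m)" for m n
      by (induct n rule: dec_induct) (use wsub in auto)
    have eps: "\<exists>n. \<forall>x\<in>B (w n). \<forall>y\<in>B (w n). dist x y < \<epsilon>" if epos: "\<epsilon> > 0" for \<epsilon> :: real
    proof -
      obtain n where n: "1 / (real n + 1) < \<epsilon>"
        using nat_approx_posE[OF epos] by (metis of_nat_Suc add.commute)
      show ?thesis
      proof (intro exI ballI)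
        fix x y assume "x \<in> B (w n)" "y \<in> B (w n)"
        then have "dist x y \<le> diameter (B (w n))" by (rule diameter_bounded_bound[OF Bbd])
        then show "dist x y < \<epsilon>" using wdiam[of n] n by linarith
      qed
    qed
    obtain a where a: "\<And>n. a \<in> B (w n)"
      using decreasing_closed_nest[of "\<lambda>n. B (w n)", OF Bcl Bne dec eps] by blast
    have "strict_mono s" using smono by (simp add: strict_mono_Suc_iff)
    then have infs: "infinite (range s)" using strict_mono_imp_inj_on
      by (metis finite_imageD infinite_UNIV_nat inj_on_subset subset_UNIV)
    have lim: "(\<lambda>k. fs (enumerate L k) a) \<longlonglongrightarrow> f a"
      using conv by (simp add: conv_sets_def)
    define \<epsilon> where "\<epsilon> = 1 / (real d + 1)"
    have \<epsilon>: "\<epsilon> > 0" by (simp add: \<epsilon>_def)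
    have "eventually (\<lambda>k. dist (fs (enumerate L k) a) (f a) < \<epsilon>) sequentially"
      using lim \<epsilon> tendstoD by blast
    then obtain K where K: "\<And>k. k \<ge> K \<Longrightarrow> \<bar>fs (enumerate L k) a - f a\<bar> < \<epsilon>"
      by (auto simp: eventually_sequentially dist_real_def)
    have "range s \<subseteq> enumerate L ` {..<K}"
    proof
      fix n assume "n \<in> range s"
      then obtain i where i: "n = s i" by auto
      have "n \<in> range (enumerate L)" using sL i range_enumerate[OF L] by simp
      then obtain k where k: "n = enumerate L k" by auto
      have "\<bar>fs n a - f a\<bar> > \<epsilon>" using wval[OF a] i \<epsilon>_def by simp
      then have "k < K" using K[of k] k by force
      then show "n \<in> enumerate L ` {..<K}" using k by auto
    qed
    then show False using infs finite_subset by blast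
  qed
next
  assume wf: "wf_tree (S_tree fs f B L)"
  show "L \<in> conv_sets fs f"
  proof (rule ccontr)
    assume nc: "L \<notin> conv_sets fs f"
    then obtain x where nx: "\<not> (\<lambda>k. fs (enumerate L k) x) \<longlonglongrightarrow> f x"
      using L by (auto simp: conv_sets_def)
    obtain \<epsilon> where \<epsilon>: "\<epsilon> > 0" and ne: "\<not> eventually (\<lambda>k. dist (fs (enumerate L k) x) (f x) < \<epsilon>) sequentially"
      using nx tendsto_iff by blast
    have freq: "\<exists>k\<ge>K. \<bar>fs (enumerate L k) x - f x\<bar> \<ge> \<epsilon>" for K
      using ne unfolding eventually_sequentially dist_real_def by (meson not_le)
    obtain d :: nat where d: "1 / (real d + 1) < \<epsilon>"
      using nat_approx_posE[OF \<epsilon>] by (metis of_nat_Suc add.commute)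
    define M where "M = {n \<in> L. \<bar>fs n x - f x\<bar> > 1 / (real d + 1)}"
    have infM: "infinite M"
      unfolding infinite_nat_iff_unbounded_le
    proof
      fix K
      obtain k where k: "k \<ge> K" "\<bar>fs (enumerate L k) x - f x\<bar> \<ge> \<epsilon>" using freq by blast
      have "enumerate L k \<ge> k" using le_enumerate[OF L] .
      moreover have "enumerate L k \<in> L" using enumerate_in_set[OF L] .
      ultimately show "\<exists>n\<ge>K. n \<in> M" using k d unfolding M_def
        by (intro exI[of _ "enumerate L k"]) auto
    qed
    define n where "n = enumerate M"
    have nM: "n i \<in> M" for i unfolding n_def using enumerate_in_set[OF infM] .
    have nmono: "i < j \<Longrightarrow> n i < n j" for i j unfolding n_def using enumerate_mono infM by blast
    define U where "U = (\<lambda>i. {z. 1 / (real d + 1) < \<bar>fs (n i) z - f z\<bar>})"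
    have Uopen: "open (U i)" for i
      unfolding U_def
      by (intro open_Collect_less continuous_intros cont f_cont)
    have xU: "x \<in> U i" for i using nM[of i] unfolding U_def M_def by auto
    define P where "P = (\<lambda>(i::nat) V j. x \<in> interior (B j) \<and> B j \<subseteq> V \<and> diameter (B j) \<le> 1 / (real i + 1))"
    define pk where "pk = (\<lambda>i V. SOME j. P i V j)"
    have pkP: "P i V (pk i V)" if "open V" "x \<in> V" for i V
      unfolding pk_def
      by (rule someI_ex) (use pick_ball[OF B D(2) that, of i] in \<open>simp add: P_def\<close>)
    define l where "l = rec_nat (pk 0 (U 0)) (\<lambda>i j. pk (Suc i) (U (Suc i) \<inter> interior (B j)))"
    have l0: "l 0 = pk 0 (U 0)" by (simp add: l_def)
    have lS: "l (Suc i) = pk (Suc i) (U (Suc i) \<inter> interior (B (l i)))" for i by (simp add: l_def)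
    have lP: "P i (U i) (l i)" for i
    proof (induct i)
      case 0 then show ?case using pkP[OF Uopen xU] l0 by simp
    next
      case (Suc i)
      have "P (Suc i) (U (Suc i) \<inter> interior (B (l i))) (l (Suc i))"
        unfolding lS using Suc by (intro pkP) (auto simp: P_def intro: Uopen xU)
      then show ?case by (auto simp: P_def)
    qed
    have lsub: "B (l (Suc i)) \<subseteq> B (l i)" for i
    proof -
      have "P (Suc i) (U (Suc i) \<inter> interior (B (l i))) (l (Suc i))"
        unfolding lS using lP[of i] by (intro pkP) (auto simp: P_def intro: Uopen xU)
      then show ?thesis using interior_subset by (auto simp: P_def)
    qed
    define \<sigma> where "\<sigma> = (\<lambda>k. case k of 0 \<Rightarrow> d | Suc i \<Rightarrow> n i)"
    define \<omega> where "\<omega> = (\<lambda>k. case k of 0 \<Rightarrow> d | Suc i \<Rightarrow> l i)"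
    have "(map \<sigma> [0..<k], map \<omega> [0..<k]) \<in> S_tree fs f B L" for k
    proof (cases k)
      case 0 then show ?thesis by (simp add: S_tree_def)
    next
      case (Suc m)
      have "(map n [0..<m], map l [0..<m]) \<in> S_d fs f B L d"
      proof -
        have 1: "sorted_wrt (<) (map n [0..<m])"
          unfolding sorted_wrt_iff_nth_less using nmono by simp
        have 2: "set (map n [0..<m]) \<subseteq> L" using nM by (auto simp: M_def)
        have 3: "acceptable B (map l [0..<m])"
          unfolding acceptable_def using lsub lP by (simp add: P_def)
        have 4: "\<forall>i<length (map n [0..<m]). \<forall>z\<in>B (map l [0..<m] ! i). \<bar>fs (map n [0..<m] ! i) z - f z\<bar> > 1 / (real d + 1)"
          using lP unfolding P_def U_def by auto
        show ?thesis unfolding S_d_def mem_Collect_eq prod.case using 1 2 3 4 by (intro conjI) simp_all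
      qed
      then show ?thesis unfolding Suc map_upt_Suc0 S_tree_def \<sigma>_def \<omega>_def by auto
    qed
    then show False using wf unfolding wf_tree_def by blast
  qed
qed

end
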